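(* Let $P$ be a grid polygon and let $\pi$ be a shortest path in $P$ between two cells of $P$. Then its length satisfies $|\pi|\le \frac12 E(P)-2$.
   Context: The plane is tiled by unit square cells indexed by $(x,y)\in\mathbb{Z}^2$; two cells are adjacent if they share an edge. A grid polygon $P$ is a finite nonempty set of cells connected under adjacency (it may contain holes, i.e. bounded regions of cells not in $P$). $E(P)$ is the number of unit edges shared by a cell of $P$ and a cell not in $P$. A path in $P$ is a sequence of cells of $P$ in which consecutive cells are adjacent; its length is the number of steps, i.e. the number of cells minus one. *)

theory Defs
  imports Main
begin

type_synonym cell = "int \<times> int"

definition adj :: "cell \<Rightarrow> cell \<Rightarrow> bool" where
  "adj c d \<longleftrightarrow> \<bar>fst c - fst d\<bar> + \<bar>snd c - snd d\<bar> = 1"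

definition is_path :: "cell set \<Rightarrow> cell list \<Rightarrow> bool" where
  "is_path P ps \<longleftrightarrow> ps \<noteq> [] \<and> set ps \<subseteq> P \<and>
     (\<forall>i. Suc i < length ps \<longrightarrow> adj (ps ! i) (ps ! Suc i))"

definition path_len :: "cell list \<Rightarrow> nat" where
  "path_len ps = length ps - 1"

definition connected_cells :: "cell set \<Rightarrow> bool" where
  "connected_cells P \<longleftrightarrow> (\<forall>a\<in>P. \<forall>b\<in>P. \<exists>ps. is_path P ps \<and> hd ps = a \<and> last ps = b)"

definition grid_polygon :: "cell set \<Rightarrow> bool" where
  "grid_polygon P \<longleftrightarrow> finite P \<and> P \<noteq> {} \<and> connected_cells P"

text \<open>E(P): number of unit edges between a cell of P and a cell outside P
  (each such edge corresponds to exactly one ordered pair (inside, outside)).\<close>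
definition boundary_edges :: "cell set \<Rightarrow> nat" where
  "boundary_edges P = card {(c, d). c \<in> P \<and> d \<notin> P \<and> adj c d}"

definition shortest_path :: "cell set \<Rightarrow> cell list \<Rightarrow> bool" where
  "shortest_path P ps \<longleftrightarrow> is_path P ps \<and>
     (\<forall>qs. is_path P qs \<and> hd qs = hd ps \<and> last qs = last ps \<longrightarrow> path_len ps \<le> path_len qs)"

end

theory Submission
  imports Defs
begin

lemma is_path_Nil[simp]: "\<not> is_path P []"
  by (simp add: is_path_def)

lemma is_path_single[simp]: "is_path P [x] \<longleftrightarrow> x \<in> P"
  by (simp add: is_path_def)

lemma is_path_Cons2[simp]:
  "is_path P (x # y # zs) \<longleftrightarrow> x \<in> P \<and> adj x y \<and> is_path P (y # zs)"
proof
  assume h: "is_path P (x # y # zs)"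
  have a: "\<forall>i. Suc i < length (x#y#zs) \<longrightarrow> adj ((x#y#zs)!i) ((x#y#zs)!Suc i)"
    and s: "set (x#y#zs) \<subseteq> P"
    using h unfolding is_path_def by blast+
  have "adj x y" using a[rule_format, of 0] by simp
  moreover have "is_path P (y # zs)" unfolding is_path_def
  proof (intro conjI allI impI)
    fix i assume "Suc i < length (y # zs)"
    then show "adj ((y # zs) ! i) ((y # zs) ! Suc i)" using a[rule_format, of "Suc i"] by simp
  qed (use s in auto)
  ultimately show "x \<in> P \<and> adj x y \<and> is_path P (y # zs)" using s by simp
next
  assume h: "x \<in> P \<and> adj x y \<and> is_path P (y # zs)"
  show "is_path P (x # y # zs)" unfolding is_path_def
  proof (intro conjI allI impI)
    fix i assume "Suc i < length (x # y # zs)"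
    then show "adj ((x # y # zs) ! i) ((x # y # zs) ! Suc i)"
      using h unfolding is_path_def by (cases i) auto
  qed (use h in \<open>auto simp: is_path_def\<close>)
qed

lemma is_path_join:
  "is_path P xs \<Longrightarrow> is_path P ys \<Longrightarrow> last xs = hd ys \<Longrightarrow> is_path P (xs @ tl ys)"
proof (induction xs rule: induct_list012)
  case 1 then show ?case by simp
next
  case (2 x) then show ?case by (cases ys) auto
next
  case (3 x y zs) then show ?case by auto
qed

lemma is_path_take: "is_path P xs \<Longrightarrow> n < length xs \<Longrightarrow> is_path P (take (Suc n) xs)"
  unfolding is_path_def by (auto dest: in_set_takeD)

lemma is_path_drop: "is_path P xs \<Longrightarrow> n < length xs \<Longrightarrow> is_path P (drop n xs)"
  unfolding is_path_def by (auto dest: in_set_dropD)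

lemma adj_sym: "adj a b \<Longrightarrow> adj b a"
  unfolding adj_def by (simp add: abs_minus_commute)

lemma is_path_rev: "is_path P xs \<Longrightarrow> is_path P (rev xs)"
  unfolding is_path_def
proof (intro conjI allI impI)
  fix i assume h: "xs \<noteq> [] \<and> set xs \<subseteq> P \<and> (\<forall>i. Suc i < length xs \<longrightarrow> adj (xs ! i) (xs ! Suc i))"
    and i: "Suc i < length (rev xs)"
  let ?k = "length xs - Suc (Suc i)"
  have "adj (xs ! ?k) (xs ! Suc ?k)" using h i by auto
  moreover have "Suc ?k = length xs - Suc i" using i by auto
  ultimately show "adj (rev xs ! i) (rev xs ! Suc i)" using i
    by (simp add: rev_nth adj_sym)
qed auto

lemma shortest_sub:
  assumes sp: "shortest_path P \<pi>" and ij: "i \<le> j" "j < length \<pi>"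
    and qs: "is_path P qs" "hd qs = \<pi> ! i" "last qs = \<pi> ! j"
  shows "j - i \<le> path_len qs"
proof -
  have p: "is_path P \<pi>" using sp by (simp add: shortest_path_def)
  have ne: "\<pi> \<noteq> []" "qs \<noteq> []" using p qs by (auto simp: is_path_def)
  define A where "A = take (Suc i) \<pi>"
  define B where "B = drop j \<pi>"
  have pA: "is_path P A" unfolding A_def using is_path_take[OF p] ij by simp
  have pB: "is_path P B" unfolding B_def using is_path_drop[OF p] ij by simp
  have lA: "last A = \<pi> ! i" unfolding A_def using ij
    by (simp add: take_Suc_conv_app_nth)
  have hB: "hd B = \<pi> ! j" unfolding B_def using ij by (simp add: hd_drop_conv_nth)
  have pAq: "is_path P (A @ tl qs)" using is_path_join[OF pA qs(1)] lA qs by simp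
  have lAq: "last (A @ tl qs) = \<pi> ! j"
  proof (cases "tl qs = []")
    case True
    then have "qs = [hd qs]" using ne by (cases qs) auto
    then show ?thesis using lA qs True by (metis append.right_neutral last_ConsL)
  next
    case False
    then show ?thesis using qs by (simp add: last_tl)
  qed
  have pN: "is_path P (A @ tl qs @ tl B)" using is_path_join[OF pAq pB] lAq hB by simp
  have hN: "hd (A @ tl qs @ tl B) = hd \<pi>" unfolding A_def using ne by (cases \<pi>) auto
  have lB: "last B = last \<pi>" unfolding B_def using ij by simp
  have lN: "last (A @ tl qs @ tl B) = last \<pi>"
  proof (cases "tl B = []")
    case True
    then have "B = [hd B]" using pB by (cases B) auto
    then show ?thesis using lAq hB lB True by (metis append.right_neutral last_ConsL)
  next
    case False
    then show ?thesis using lB by (simp add: last_tl)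
  qed
  have "path_len \<pi> \<le> path_len (A @ tl qs @ tl B)"
    using sp pN hN lN by (simp add: shortest_path_def)
  moreover have "length A = Suc i" "length B = length \<pi> - j" using ij by (auto simp: A_def B_def)
  ultimately show ?thesis using ij ne by (simp add: path_len_def)
qed


definition dirs :: "(int \<times> int) set" where
  "dirs = {(1,0), (-1,0), (0,1), (0,-1)}"

definition mv :: "cell \<Rightarrow> int \<times> int \<Rightarrow> nat \<Rightarrow> cell" where
  "mv c v t = (fst c + int t * fst v, snd c + int t * snd v)"

definition par :: "int \<times> int \<Rightarrow> cell \<Rightarrow> int" where
  "par v c = fst v * fst c + snd v * snd c"

definition perp :: "int \<times> int \<Rightarrow> cell \<Rightarrow> int" where
  "perp v c = snd v * fst c - fst v * snd c"

definition ext :: "cell set \<Rightarrow> int \<times> int \<Rightarrow> cell \<Rightarrow> nat" where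
  "ext P v c = (GREATEST k. \<forall>j\<le>k. mv c v j \<in> P)"

definition endc :: "cell set \<Rightarrow> int \<times> int \<Rightarrow> cell \<Rightarrow> cell" where
  "endc P v c = mv c v (ext P v c)"

lemma mv_0[simp]: "mv c v 0 = c" by (simp add: mv_def)

lemma mv_mv: "mv (mv c v s) v t = mv c v (s + t)"
  by (simp add: mv_def algebra_simps)

lemma mv_inj: "v \<in> dirs \<Longrightarrow> inj (mv c v)"
  unfolding inj_def dirs_def mv_def by auto

lemma mv_adj: "v \<in> dirs \<Longrightarrow> adj (mv c v t) (mv c v (Suc t))"
  unfolding dirs_def mv_def adj_def by auto

lemma par_mv: "v \<in> dirs \<Longrightarrow> par v (mv c v t) = par v c + int t"
  unfolding dirs_def mv_def par_def by auto

lemma adj_par_perp: "v \<in> dirs \<Longrightarrow> adj a b \<Longrightarrow>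
   \<bar>par v b - par v a\<bar> + \<bar>perp v b - perp v a\<bar> = 1"
  unfolding dirs_def par_def perp_def adj_def by (auto simp: abs_minus_commute)

lemma run_bound:
  assumes "finite P" "v \<in> dirs" "\<forall>j\<le>k. mv c v j \<in> P"
  shows "k \<le> card P"
proof -
  have "mv c v ` {0..k} \<subseteq> P" using assms by auto
  then have "card (mv c v ` {0..k}) \<le> card P" using assms by (simp add: card_mono)
  moreover have "card (mv c v ` {0..k}) = Suc k"
    using mv_inj[OF assms(2), of c] by (simp add: card_image inj_on_subset[of _ UNIV])
  ultimately show ?thesis by simp
qed

lemma ext_run:
  assumes "finite P" "v \<in> dirs" "c \<in> P"
  shows "\<forall>j\<le>ext P v c. mv c v j \<in> P"
  unfolding ext_def
  by (rule GreatestI_nat[where k=0 and b="card P"]) (use assms run_bound in auto)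

lemma ext_stop:
  assumes "finite P" "v \<in> dirs" "c \<in> P"
  shows "mv c v (Suc (ext P v c)) \<notin> P"
proof
  assume h: "mv c v (Suc (ext P v c)) \<in> P"
  have "\<forall>j\<le>Suc (ext P v c). mv c v j \<in> P"
    using ext_run[OF assms] h by (auto simp: le_Suc_eq)
  then have "Suc (ext P v c) \<le> ext P v c" unfolding ext_def
    by (rule Greatest_le_nat[where b="card P"]) (use assms run_bound in auto)
  then show False by simp
qed

lemma endc_in: "finite P \<Longrightarrow> v \<in> dirs \<Longrightarrow> c \<in> P \<Longrightarrow> endc P v c \<in> P"
  using ext_run unfolding endc_def by blast

lemma endc_bd: "finite P \<Longrightarrow> v \<in> dirs \<Longrightarrow> c \<in> P \<Longrightarrow>
  (endc P v c, mv (endc P v c) v 1) \<in> {(c, d). c \<in> P \<and> d \<notin> P \<and> adj c d}"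
  using endc_in[of P v c] ext_stop[of P v c] mv_adj[of v "endc P v c" 0]
  unfolding endc_def by (auto simp: mv_mv)

lemma straight_path:
  assumes "v \<in> dirs" "\<forall>t\<le>n. mv c v t \<in> P"
  shows "is_path P (map (mv c v) [0..<Suc n]) \<and> hd (map (mv c v) [0..<Suc n]) = c
    \<and> last (map (mv c v) [0..<Suc n]) = mv c v n \<and> path_len (map (mv c v) [0..<Suc n]) = n"
  using assms unfolding is_path_def path_len_def
  by (auto simp: hd_map last_map mv_adj simp del: upt_Suc)

lemma endc_path:
  assumes "finite P" "v \<in> dirs" "c \<in> P" "d \<in> P" "endc P v c = endc P v d"
  shows "\<exists>qs. is_path P qs \<and> hd qs = c \<and> last qs = d \<and> int (path_len qs) = \<bar>par v d - par v c\<bar>"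
proof (cases "ext P v d \<le> ext P v c")
  case True
  define n where "n = ext P v c - ext P v d"
  have "mv c v (ext P v c) = mv d v (ext P v d)" using assms(5) by (simp add: endc_def)
  then have d: "d = mv c v n" unfolding n_def using True
    by (auto simp: mv_def of_nat_diff algebra_simps prod_eq_iff)
  have "\<forall>t\<le>n. mv c v t \<in> P" using ext_run[OF assms(1-3)] n_def by auto
  from straight_path[OF assms(2) this] show ?thesis using d par_mv[OF assms(2)] by (intro exI) auto
next
  case False
  define n where "n = ext P v d - ext P v c"
  have "mv c v (ext P v c) = mv d v (ext P v d)" using assms(5) by (simp add: endc_def)
  then have c: "c = mv d v n" unfolding n_def using False
    by (auto simp: mv_def of_nat_diff algebra_simps prod_eq_iff)
  have "\<forall>t\<le>n. mv d v t \<in> P" using ext_run[OF assms(1,2,4)] n_def by auto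
  from straight_path[OF assms(2) this] show ?thesis using c par_mv[OF assms(2)]
    by (intro exI[of _ "rev (map (mv d v) [0..<Suc n])"])
      (auto simp: is_path_rev hd_rev last_rev path_len_def simp del: upt_Suc)
qed


lemma geo:
  assumes fin: "finite P" and v: "v \<in> dirs" and sp: "shortest_path P \<pi>"
    and ij: "i \<le> j" "j < length \<pi>" and e: "endc P v (\<pi> ! i) = endc P v (\<pi> ! j)"
    and k: "i \<le> k" "k < j"
  shows "perp v (\<pi> ! Suc k) = perp v (\<pi> ! k)"
proof -
  have p: "is_path P \<pi>" using sp by (simp add: shortest_path_def)
  have inP: "\<pi> ! i \<in> P" "\<pi> ! j \<in> P" using p ij unfolding is_path_def by auto
  obtain qs where qs: "is_path P qs" "hd qs = \<pi> ! i" "last qs = \<pi> ! j"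
    "int (path_len qs) = \<bar>par v (\<pi> ! j) - par v (\<pi> ! i)\<bar>"
    using endc_path[OF fin v inP e] by blast
  have le: "j - i \<le> path_len qs" using shortest_sub[OF sp ij qs(1-3)] .
  let ?dp = "\<lambda>m. par v (\<pi> ! Suc m) - par v (\<pi> ! m)"
  let ?dq = "\<lambda>m. \<bar>perp v (\<pi> ! Suc m) - perp v (\<pi> ! m)\<bar>"
  have one: "\<And>m. m \<in> {i..<j} \<Longrightarrow> \<bar>?dp m\<bar> + ?dq m = 1"
    using p ij unfolding is_path_def by (intro adj_par_perp[OF v]) auto
  have "(\<Sum>m\<in>{i..<j}. \<bar>?dp m\<bar> + ?dq m) = int (j - i)"
    using one by simp
  moreover have "(\<Sum>m\<in>{i..<j}. ?dp m) = par v (\<pi> ! j) - par v (\<pi> ! i)"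
    using sum_Suc_diff'[OF ij(1), of "\<lambda>m. par v (\<pi> ! m)"] by simp
  moreover have "\<bar>\<Sum>m\<in>{i..<j}. ?dp m\<bar> \<le> (\<Sum>m\<in>{i..<j}. \<bar>?dp m\<bar>)" by (rule sum_abs)
  ultimately have "(\<Sum>m\<in>{i..<j}. ?dq m) \<le> 0" using le qs(4)
    by (simp add: sum.distrib)
  then have "(\<Sum>m\<in>{i..<j}. ?dq m) = 0" by (simp add: antisym sum_nonneg)
  then have "\<forall>m\<in>{i..<j}. ?dq m = 0" by (subst (asm) sum_nonneg_eq_0_iff) auto
  then show ?thesis using k by auto
qed

lemma count:
  assumes fin: "finite P" and v: "v \<in> dirs" and sp: "shortest_path P \<pi>"
  shows "1 + card {k. k < length \<pi> - 1 \<and> perp v (\<pi> ! Suc k) \<noteq> perp v (\<pi> ! k)}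
    \<le> card (endc P v ` set \<pi>)"
proof -
  have p: "is_path P \<pi>" using sp by (simp add: shortest_path_def)
  have ne: "\<pi> \<noteq> []" using p by (simp add: is_path_def)
  define K where "K = {k. k < length \<pi> - 1 \<and> perp v (\<pi> ! Suc k) \<noteq> perp v (\<pi> ! k)}"
  define D where "D = insert 0 (Suc ` K)"
  have fK: "finite K" unfolding K_def by simp
  have cD: "card D = 1 + card K" unfolding D_def using fK by (simp add: card_image)
  have Dlt: "\<And>m. m \<in> D \<Longrightarrow> m < length \<pi>" using ne unfolding D_def K_def by auto
  have neq: "endc P v (\<pi> ! m) \<noteq> endc P v (\<pi> ! m')" if mm: "m \<in> D" "m' \<in> D" "m < m'" for m m'
  proof
    assume e: "endc P v (\<pi> ! m) = endc P v (\<pi> ! m')"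
    obtain k where k: "k \<in> K" "m' = Suc k" using mm unfolding D_def by auto
    have "perp v (\<pi> ! Suc k) = perp v (\<pi> ! k)"
      using geo[OF fin v sp _ Dlt[OF mm(2)] e, of k] mm k by auto
    then show False using k unfolding K_def by auto
  qed
  have "inj_on (\<lambda>m. endc P v (\<pi> ! m)) D"
    unfolding inj_on_def using neq by (metis linorder_neqE_nat)
  moreover have "(\<lambda>m. endc P v (\<pi> ! m)) ` D \<subseteq> endc P v ` set \<pi>" using Dlt by auto
  ultimately have "card D \<le> card (endc P v ` set \<pi>)" by (intro card_inj_on_le) auto
  then show ?thesis using cD K_def by simp
qed


lemma adj_mv: "adj c d \<Longrightarrow> \<exists>w\<in>dirs. d = mv c w 1"
  unfolding adj_def dirs_def mv_def
  by (cases c; cases d) (auto simp: abs_if split: if_splits)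

lemma mv1_inj: "w \<in> dirs \<Longrightarrow> w' \<in> dirs \<Longrightarrow> mv e w 1 = mv e w' 1 \<Longrightarrow> w = w'"
  unfolding mv_def by (auto simp: prod_eq_iff)

lemma adj_neq: "adj c d \<Longrightarrow> c \<noteq> d"
  unfolding adj_def by auto

theorem lemma4:
  fixes P :: "cell set" and \<pi> :: "cell list"
  assumes "grid_polygon P"
    and "shortest_path P \<pi>"
  shows "2 * int (path_len \<pi>) \<le> int (boundary_edges P) - 4"
proof -
  have fin: "finite P" using assms(1) by (simp add: grid_polygon_def)
  have p: "is_path P \<pi>" using assms(2) by (simp add: shortest_path_def)
  have setP: "set \<pi> \<subseteq> P" using p by (simp add: is_path_def)
  define Bd where "Bd = {(c, d). c \<in> P \<and> d \<notin> P \<and> adj c d}"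
  have "Bd \<subseteq> (\<lambda>(c,w). (c, mv c w 1)) ` (P \<times> dirs)"
    unfolding Bd_def using adj_mv by fastforce
  then have fB: "finite Bd" by (rule finite_subset) (auto simp: fin dirs_def)
  define S where "S = Sigma dirs (\<lambda>w. endc P w ` set \<pi>)"
  have fd: "finite dirs" by (simp add: dirs_def)
  have "(\<lambda>(w,e). (e, mv e w 1)) ` S \<subseteq> Bd"
  proof
    fix x assume "x \<in> (\<lambda>(w,e). (e, mv e w 1)) ` S"
    then obtain w c where "w \<in> dirs" "c \<in> set \<pi>" "x = (endc P w c, mv (endc P w c) w 1)"
      unfolding S_def by auto
    then show "x \<in> Bd" unfolding Bd_def using endc_bd[OF fin, of w c] setP by auto
  qed
  moreover have "inj_on (\<lambda>(w,e). (e, mv e w 1)) S"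
  proof (rule inj_onI)
    fix x y assume "x \<in> S" "y \<in> S" and e: "(\<lambda>(w,e). (e, mv e w 1)) x = (\<lambda>(w,e). (e, mv e w 1)) y"
    obtain w1 e1 w2 e2 where xy: "x = (w1, e1)" "y = (w2, e2)" by (cases x; cases y) auto
    have "w1 \<in> dirs" "w2 \<in> dirs" using \<open>x \<in> S\<close> \<open>y \<in> S\<close> xy unfolding S_def by auto
    moreover have "e1 = e2" "mv e1 w1 1 = mv e1 w2 1" using e xy by auto
    ultimately show "x = y" using mv1_inj xy by blast
  qed
  ultimately have "card S \<le> card Bd" using fB by (intro card_inj_on_le) auto
  moreover have "card S = (\<Sum>w\<in>dirs. card (endc P w ` set \<pi>))"
    unfolding S_def using fd by (simp add: card_SigmaI)
  moreover have "(\<Sum>w\<in>dirs. card (endc P w ` set \<pi>)) =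
     card (endc P (1,0) ` set \<pi>) + card (endc P (-1,0) ` set \<pi>)
     + card (endc P (0,1) ` set \<pi>) + card (endc P (0,-1) ` set \<pi>)"
    unfolding dirs_def by simp
  moreover
  define L where "L = length \<pi> - 1"
  define Kx where "Kx = {k. k < L \<and> fst (\<pi> ! Suc k) \<noteq> fst (\<pi> ! k)}"
  define Ky where "Ky = {k. k < L \<and> snd (\<pi> ! Suc k) \<noteq> snd (\<pi> ! k)}"
  have "1 + card Ky \<le> card (endc P (1,0) ` set \<pi>)"
    using count[OF fin _ assms(2), of "(1,0)"] unfolding Ky_def L_def by (simp add: dirs_def perp_def)
  moreover have "1 + card Ky \<le> card (endc P (-1,0) ` set \<pi>)"
    using count[OF fin _ assms(2), of "(-1,0)"] unfolding Ky_def L_def by (simp add: dirs_def perp_def)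
  moreover have "1 + card Kx \<le> card (endc P (0,1) ` set \<pi>)"
    using count[OF fin _ assms(2), of "(0,1)"] unfolding Kx_def L_def by (simp add: dirs_def perp_def)
  moreover have "1 + card Kx \<le> card (endc P (0,-1) ` set \<pi>)"
    using count[OF fin _ assms(2), of "(0,-1)"] unfolding Kx_def L_def by (simp add: dirs_def perp_def)
  moreover have "L \<le> card Kx + card Ky"
  proof -
    have "{..<L} \<subseteq> Kx \<union> Ky"
    proof
      fix k assume "k \<in> {..<L}"
      then have "adj (\<pi> ! k) (\<pi> ! Suc k)" using p unfolding is_path_def L_def by auto
      then have "\<pi> ! k \<noteq> \<pi> ! Suc k" by (rule adj_neq)
      then show "k \<in> Kx \<union> Ky" using \<open>k \<in> {..<L}\<close> unfolding Kx_def Ky_def by (auto simp: prod_eq_iff)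
    qed
    then have "card {..<L} \<le> card (Kx \<union> Ky)" by (intro card_mono) (auto simp: Kx_def Ky_def)
    also have "\<dots> \<le> card Kx + card Ky" by (rule card_Un_le)
    finally show ?thesis by simp
  qed
  ultimately have "4 + 2 * L \<le> card Bd" by linarith
  then show ?thesis unfolding boundary_edges_def Bd_def[symmetric] path_len_def L_def[symmetric] by linarith
qed

end
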